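(* Let $A \subset \mathbb{Z}^d$ consist of exactly $d+2$ points, contain $0$, and generate $\mathbb{Z}^d$ additively. Denote the nonzero elements of $A$ by $v_0, v_1, \ldots, v_d$, where $v_1, \ldots, v_d$ are linearly independent. For integers $k$ let $C_k = \{\sum_{i=1}^d n_i v_i : n_i \in \mathbb{N}, \ \sum_{i=1}^d n_i \leq k\}$ (so $C_k = \emptyset$ for $k < 0$), and for integers $j, h \geq 0$ let $A_{j,h} = j v_0 + C_{h-j}$. Let $N$ be the order of $v_0$ in the finite group $\mathbb{Z}^d / \mathrm{span}_{\mathbb{Z}}\{v_1,\ldots,v_d\}$. Let $h \geq 0$ and let $I \subseteq \{0,1,\ldots,h\}$ be a nonempty set all of whose elements are congruent modulo $N$, with $m = \min I$ and $M = \max I$. Then \[ \bigcap_{j \in I} A_{j,h} = A_{m,h} \cap A_{M,h}. \]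
   Context: $\mathbb{N} = \{0,1,2,\ldots\}$; for a vector $x$ and set $S$, $x + S = \{x + s : s \in S\}$. *)

theory Defs
  imports "HOL-Analysis.Analysis"
begin

text \<open>Integer vectors in Z^d are modelled as int ^ 'd, with d = CARD('d).\<close>

definition zsc :: "int \<Rightarrow> int ^ 'd \<Rightarrow> int ^ 'd" where
  "zsc c x = (\<chi> i. c * x $ i)"

definition rvec :: "int ^ 'd \<Rightarrow> real ^ 'd" where
  "rvec x = (\<chi> i. real_of_int (x $ i))"

definition generates_Zd :: "(int ^ 'd) set \<Rightarrow> bool" where
  "generates_Zd A \<longleftrightarrow> (\<forall>z. \<exists>c. z = (\<Sum>a\<in>A. zsc (c a) a))"

definition Cset :: "(nat \<Rightarrow> int ^ 'd) \<Rightarrow> int \<Rightarrow> (int ^ 'd) set" where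
  "Cset v k = {(\<Sum>i\<in>{1..CARD('d)}. zsc (int (n i)) (v i)) | n :: nat \<Rightarrow> nat.
                 int (\<Sum>i\<in>{1..CARD('d)}. n i) \<le> k}"

definition Ajh :: "(nat \<Rightarrow> int ^ 'd) \<Rightarrow> nat \<Rightarrow> nat \<Rightarrow> (int ^ 'd) set" where
  "Ajh v j h = (\<lambda>x. zsc (int j) (v 0) + x) ` Cset v (int h - int j)"

definition lat :: "(nat \<Rightarrow> int ^ 'd) \<Rightarrow> (int ^ 'd) set" where
  "lat v = {(\<Sum>i\<in>{1..CARD('d)}. zsc (c i) (v i)) | c :: nat \<Rightarrow> int. True}"

definition ordN :: "(nat \<Rightarrow> int ^ 'd) \<Rightarrow> nat" where
  "ordN v = (LEAST N::nat. N > 0 \<and> zsc (int N) (v 0) \<in> lat v)"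

end

theory Submission imports Defs begin

lemma zsum_comp: "(\<Sum>i\<in>S. zsc (c i) (w i)) $ l = (\<Sum>i\<in>S. c i * w i $ l)"
  by (simp add: zsc_def)

lemma uniq:
  fixes v :: "nat \<Rightarrow> int ^ 'd"
  assumes ind: "independent (rvec ` v ` K)" and inj: "inj_on v K" and fin: "finite K"
    and z: "\<forall>l. (\<Sum>i\<in>K. e i * v i $ l) = 0" and iK: "i \<in> K"
  shows "e i = 0"
proof -
  have injr: "inj rvec" unfolding inj_def rvec_def by (simp add: vec_eq_iff)
  have inj2: "inj_on (rvec \<circ> v) K" using inj injr unfolding inj_on_def comp_def by blast
  have invv: "inv_into K (rvec \<circ> v) (rvec (v i)) = i" if "i \<in> K" for i
    using inv_into_f_f[OF inj2 that] by simp
  define S where "S = rvec ` v ` K"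
  have SS: "S = (rvec \<circ> v) ` K" unfolding S_def by (simp add: image_comp)
  define u where "u y = real_of_int (e (inv_into K (rvec \<circ> v) y))" for y
  have "(\<Sum>y\<in>S. u y *\<^sub>R y) = (\<Sum>i\<in>K. u ((rvec \<circ> v) i) *\<^sub>R (rvec \<circ> v) i)"
    unfolding SS using sum.reindex[OF inj2, of "\<lambda>y. u y *\<^sub>R y"] by (simp add: comp_def)
  also have "\<dots> = (\<Sum>i\<in>K. real_of_int (e i) *\<^sub>R rvec (v i))"
    by (rule sum.cong) (auto simp: u_def invv)
  also have "\<dots> = 0"
  proof (subst vec_eq_iff, intro allI)
    fix l
    have "(\<Sum>i\<in>K. real_of_int (e i) *\<^sub>R rvec (v i)) $ l = (\<Sum>i\<in>K. real_of_int (e i * v i $ l))"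
      by (simp add: rvec_def)
    also have "\<dots> = real_of_int (\<Sum>i\<in>K. e i * v i $ l)" by simp
    also have "\<dots> = 0" using z by simp
    finally show "(\<Sum>i\<in>K. real_of_int (e i) *\<^sub>R rvec (v i)) $ l = 0 $ l" by simp
  qed
  finally have s0: "(\<Sum>y\<in>S. u y *\<^sub>R y) = 0" .
  have "finite S" unfolding S_def using fin by simp
  hence "u ((rvec \<circ> v) i) = 0" using ind s0 iK unfolding S_def
    using real_vector.independentD[of S S u "(rvec \<circ> v) i"] SS S_def by auto
  thus ?thesis using inv_into_f_f[OF inj2 iK] by (simp add: u_def)
qed

lemma Ajh_iff: "x \<in> Ajh v j h \<longleftrightarrow> (\<exists>n. int (\<Sum>i\<in>{1..CARD('d)}. n i) \<le> int h - int j \<and>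
   x = zsc (int j) (v 0) + (\<Sum>i\<in>{1..CARD('d)}. zsc (int (n i)) (v i)))"
  for v :: "nat \<Rightarrow> int ^ 'd"
  unfolding Ajh_def Cset_def by blast

lemma interp:
  fixes v :: "nat \<Rightarrow> int ^ 'd" and n n' :: "nat \<Rightarrow> nat" and c :: "nat \<Rightarrow> int"
  assumes ind: "independent (rvec ` v ` {1..CARD('d)})" and inj: "inj_on v {1..CARD('d)}"
    and mj: "m < j" and jM: "j < M" and jk: "j = m + k * N" and Mq: "M = m + q * N"
    and cN: "\<forall>l. int N * v 0 $ l = (\<Sum>i\<in>{1..CARD('d)}. c i * v i $ l)"
    and nb: "int (\<Sum>i\<in>{1..CARD('d)}. n i) \<le> int h - int m"
    and nx: "x = zsc (int m) (v 0) + (\<Sum>i\<in>{1..CARD('d)}. zsc (int (n i)) (v i))"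
    and nb': "int (\<Sum>i\<in>{1..CARD('d)}. n' i) \<le> int h - int M"
    and nx': "x = zsc (int M) (v 0) + (\<Sum>i\<in>{1..CARD('d)}. zsc (int (n' i)) (v i))"
  shows "x \<in> Ajh v j h"
proof -
  define K where "K = {1..CARD('d)}"
  have fK: "finite K" unfolding K_def by simp
  define a where "a = int q * int N"
  define t where "t = int k * int N"
  have apos: "a > 0" using mj jM jk Mq unfolding a_def by (cases "q = 0") auto
  have ta: "t < a" using mj jM jk Mq unfolding a_def t_def by simp
  have t0: "t \<ge> 0" unfolding t_def by simp
  have xl: "x $ l = int m * v 0 $ l + (\<Sum>i\<in>K. int (n i) * v i $ l)" for l
    using nx unfolding K_def by (simp add: zsc_def)
  have xl': "x $ l = int M * v 0 $ l + (\<Sum>i\<in>K. int (n' i) * v i $ l)" for l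
    using nx' unfolding K_def by (simp add: zsc_def)
  have z: "\<forall>l. (\<Sum>i\<in>K. (int (n i) - int (n' i) - int q * c i) * v i $ l) = 0"
  proof
    fix l
    have "(\<Sum>i\<in>K. (int (n i) - int (n' i) - int q * c i) * v i $ l)
       = (\<Sum>i\<in>K. int (n i) * v i $ l) - (\<Sum>i\<in>K. int (n' i) * v i $ l) - int q * (\<Sum>i\<in>K. c i * v i $ l)"
      by (simp add: algebra_simps sum_subtractf sum_distrib_left sum.distrib)
    also have "\<dots> = (int M - int m) * v 0 $ l - int q * (int N * v 0 $ l)"
      using xl[of l] xl'[of l] cN unfolding K_def by (simp add: algebra_simps)
    also have "\<dots> = 0" using Mq by (simp add: algebra_simps)
    finally show "(\<Sum>i\<in>K. (int (n i) - int (n' i) - int q * c i) * v i $ l) = 0" .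
  qed
  have D: "int (n i) - int (n' i) = int q * c i" if "i \<in> K" for i
    using uniq[OF ind[folded K_def] inj[folded K_def] fK z that] by simp
  have key: "a * (int (n i) - int k * c i) = (a - t) * int (n i) + t * int (n' i)" if "i \<in> K" for i
  proof -
    have "t * (int (n i) - int (n' i)) = int k * int N * (int q * c i)" using D[OF that] t_def by simp
    thus ?thesis unfolding a_def t_def by (simp add: algebra_simps)
  qed
  have nn: "int (n i) - int k * c i \<ge> 0" if "i \<in> K" for i
  proof -
    have "(a - t) * int (n i) + t * int (n' i) \<ge> 0" using ta t0 by simp
    hence "a * (int (n i) - int k * c i) \<ge> 0" using key[OF that] by simp
    thus ?thesis using apos by (simp add: zero_le_mult_iff)
  qed
  define n'' where "n'' i = nat (int (n i) - int k * c i)" for i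
  have n''i: "int (n'' i) = int (n i) - int k * c i" if "i \<in> K" for i
    using nn[OF that] unfolding n''_def by simp
  have "a * (\<Sum>i\<in>K. int (n'' i)) = (\<Sum>i\<in>K. a * (int (n i) - int k * c i))"
    by (simp add: sum_distrib_left n''i)
  also have "\<dots> = (\<Sum>i\<in>K. (a - t) * int (n i) + t * int (n' i))" by (rule sum.cong) (simp_all add: key)
  also have "\<dots> = (a - t) * int (\<Sum>i\<in>K. n i) + t * int (\<Sum>i\<in>K. n' i)"
    by (simp add: sum.distrib sum_distrib_left)
  also have "\<dots> \<le> (a - t) * (int h - int m) + t * (int h - int M)"
    using nb nb' ta t0 unfolding K_def by (intro add_mono mult_left_mono) auto
  also have "\<dots> = a * (int h - int j)" using jk Mq unfolding a_def t_def by (simp add: algebra_simps)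
  finally have "a * (\<Sum>i\<in>K. int (n'' i)) \<le> a * (int h - int j)" .
  hence sb: "int (\<Sum>i\<in>K. n'' i) \<le> int h - int j" using apos by simp
  have "x = zsc (int j) (v 0) + (\<Sum>i\<in>K. zsc (int (n'' i)) (v i))"
  proof (subst vec_eq_iff, intro allI)
    fix l
    have "(zsc (int j) (v 0) + (\<Sum>i\<in>K. zsc (int (n'' i)) (v i))) $ l
       = int j * v 0 $ l + (\<Sum>i\<in>K. (int (n i) - int k * c i) * v i $ l)"
      by (simp add: zsc_def n''i)
    also have "\<dots> = int j * v 0 $ l + (\<Sum>i\<in>K. int (n i) * v i $ l) - int k * (\<Sum>i\<in>K. c i * v i $ l)"
      by (simp add: algebra_simps sum_subtractf sum_distrib_left sum.distrib)
    also have "\<dots> = x $ l" using xl[of l] cN jk unfolding K_def by (simp add: algebra_simps)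
    finally show "x $ l = (zsc (int j) (v 0) + (\<Sum>i\<in>K. zsc (int (n'' i)) (v i))) $ l" by simp
  qed
  thus ?thesis unfolding Ajh_iff using sb unfolding K_def by blast
qed

theorem lemma6p1:
  fixes A :: "(int ^ 'd) set" and v :: "nat \<Rightarrow> int ^ 'd"
    and h :: nat and I :: "nat set"
  assumes "finite A" and "card A = CARD('d) + 2" and "0 \<in> A"
    and "generates_Zd A"
    and "A - {0} = v ` {0..CARD('d)}"
    and "inj_on v {0..CARD('d)}"
    and "independent (rvec ` v ` {1..CARD('d)})"
    and "I \<subseteq> {0..h}" and "I \<noteq> {}"
    and "\<forall>i\<in>I. \<forall>j\<in>I. i mod ordN v = j mod ordN v"
  shows "(\<Inter>j\<in>I. Ajh v j h) = Ajh v (Min I) h \<inter> Ajh v (Max I) h"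
proof -
  have fI: "finite I" using assms(8) finite_subset by blast
  have mI: "Min I \<in> I" and MI: "Max I \<in> I" using fI assms(9) by auto
  have inj: "inj_on v {1..CARD('d)}" using assms(6) by (rule inj_on_subset) auto
  show ?thesis
  proof
    show "(\<Inter>j\<in>I. Ajh v j h) \<subseteq> Ajh v (Min I) h \<inter> Ajh v (Max I) h" using mI MI by blast
  next
    show "Ajh v (Min I) h \<inter> Ajh v (Max I) h \<subseteq> (\<Inter>j\<in>I. Ajh v j h)"
    proof
      fix x assume x: "x \<in> Ajh v (Min I) h \<inter> Ajh v (Max I) h"
      show "x \<in> (\<Inter>j\<in>I. Ajh v j h)"
      proof
        fix j assume jI: "j \<in> I"
        define m where "m = Min I"
        define M where "M = Max I"
        have mj: "m \<le> j" and jM: "j \<le> M" using jI fI unfolding m_def M_def by auto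
        show "x \<in> Ajh v j h"
        proof (cases "j = m \<or> j = M")
          case True thus ?thesis using x m_def M_def by blast
        next
          case False
          hence mj': "m < j" and jM': "j < M" using mj jM by auto
          obtain n where nb: "int (\<Sum>i\<in>{1..CARD('d)}. n i) \<le> int h - int m"
            and nx: "x = zsc (int m) (v 0) + (\<Sum>i\<in>{1..CARD('d)}. zsc (int (n i)) (v i))"
            using x Ajh_iff[of x v m h] unfolding m_def by blast
          obtain n' where nb': "int (\<Sum>i\<in>{1..CARD('d)}. n' i) \<le> int h - int M"
            and nx': "x = zsc (int M) (v 0) + (\<Sum>i\<in>{1..CARD('d)}. zsc (int (n' i)) (v i))"
            using x Ajh_iff[of x v M h] unfolding M_def by blast
          have "zsc (int (M - m)) (v 0) = (\<Sum>i\<in>{1..CARD('d)}. zsc (int (n i) - int (n' i)) (v i))"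
          proof (subst vec_eq_iff, intro allI)
            fix l
            have "x $ l = int m * v 0 $ l + (\<Sum>i\<in>{1..CARD('d)}. int (n i) * v i $ l)"
              using nx by (simp add: zsc_def)
            moreover have "x $ l = int M * v 0 $ l + (\<Sum>i\<in>{1..CARD('d)}. int (n' i) * v i $ l)"
              using nx' by (simp add: zsc_def)
            moreover have "(\<Sum>i\<in>{1..CARD('d)}. zsc (int (n i) - int (n' i)) (v i)) $ l
               = (\<Sum>i\<in>{1..CARD('d)}. int (n i) * v i $ l) - (\<Sum>i\<in>{1..CARD('d)}. int (n' i) * v i $ l)"
              by (simp add: zsc_def left_diff_distrib sum_subtractf)
            moreover have "zsc (int (M - m)) (v 0) $ l = int M * v 0 $ l - int m * v 0 $ l"
              using mj' jM' by (simp add: zsc_def of_nat_diff left_diff_distrib)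
            ultimately show "zsc (int (M - m)) (v 0) $ l = (\<Sum>i\<in>{1..CARD('d)}. zsc (int (n i) - int (n' i)) (v i)) $ l"
              by linarith
          qed
          hence "\<exists>c. zsc (int (M - m)) (v 0) = (\<Sum>i\<in>{1..CARD('d)}. zsc (c i) (v i))"
            by (rule exI[where x="\<lambda>i. int (n i) - int (n' i)"])
          hence "zsc (int (M - m)) (v 0) \<in> lat v" unfolding lat_def by simp
          hence P: "M - m > 0 \<and> zsc (int (M - m)) (v 0) \<in> lat v" using mj' jM' by simp
          define N where "N = ordN v"
          have PN: "N > 0 \<and> zsc (int N) (v 0) \<in> lat v"
            unfolding N_def ordN_def by (rule LeastI[of _ "M - m"]) (rule P)
          then obtain c where c: "zsc (int N) (v 0) = (\<Sum>i\<in>{1..CARD('d)}. zsc (c i) (v i))"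
            unfolding lat_def by blast
          have cN: "\<forall>l. int N * v 0 $ l = (\<Sum>i\<in>{1..CARD('d)}. c i * v i $ l)"
          proof
            fix l show "int N * v 0 $ l = (\<Sum>i\<in>{1..CARD('d)}. c i * v i $ l)"
              using arg_cong[OF c, of "\<lambda>y. y $ l"] by (simp add: zsc_def)
          qed
          have "m mod N = j mod N" "m mod N = M mod N" using assms(10) mI MI jI
            unfolding N_def m_def M_def by metis+
          hence "N dvd j - m" "N dvd M - m"
            using mod_eq_dvd_iff_nat[OF mj, of N] mod_eq_dvd_iff_nat[of m M N] mj jM by simp_all
          then obtain k q where "j - m = N * k" "M - m = N * q" by (auto elim!: dvdE)
          hence jk: "j = m + k * N" and Mq: "M = m + q * N" using mj jM by (simp_all add: mult.commute)
          show ?thesis by (rule interp[OF assms(7) inj mj' jM' jk Mq cN nb nx nb' nx'])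
        qed
      qed
    qed
  qed
qed

end
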